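(* Let $D=(S\uplus I,A)$ be a directed acyclic graph whose vertex set is partitioned into a set $S$ and a set $I$ of internal vertices, and let $T\subseteq I$ be a set of vertices that are pairwise false twins in $D$. Then among the total elimination sequences of $D$ of minimum cost there is one in which the vertices of $T$ are eliminated consecutively (i.e., they form a contiguous block of the sequence).
   Context: For a DAG $D$ and a vertex $v$, $N^-_D(v)$ and $N^+_D(v)$ are the open in- and out-neighborhoods, and the Markowitz degree is $\mu_D(v)=|N^-_D(v)|\cdot|N^+_D(v)|$. Two vertices $u,v$ are false twins if $N^-_D(u)=N^-_D(v)$ and $N^+_D(u)=N^+_D(v)$. Eliminating $v$ produces $D_{/v}$: delete $v$ and add every arc $(x,y)$ with $x\in N^-_D(v)$, $y\in N^+_D(v)$ not already present. For a sequence $\sigma=(v_1,\dots,v_\ell)$ of distinct internal vertices, $D_\sigma=(((D_{/v_1})_{/v_2})\dots)_{/v_\ell}$; $\sigma$ is total if $\ell=|I|$. The cost of $\sigma$ is $\sum_{i=1}^{\ell}\mu_{D_{(v_1,\dots,v_{i-1})}}(v_i)$, the sum of Markowitz degrees of each vertex at the moment it is eliminated. *)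

theory Defs
  imports Main
begin

(* A digraph is represented by its arc relation A :: ('a * 'a) set;
   the vertex set is given separately as S \<union> I. *)

definition in_nbrs :: "('a \<times> 'a) set \<Rightarrow> 'a \<Rightarrow> 'a set" where
  "in_nbrs A v = {x. (x, v) \<in> A}"

definition out_nbrs :: "('a \<times> 'a) set \<Rightarrow> 'a \<Rightarrow> 'a set" where
  "out_nbrs A v = {y. (v, y) \<in> A}"

definition markowitz :: "('a \<times> 'a) set \<Rightarrow> 'a \<Rightarrow> nat" where
  "markowitz A v = card (in_nbrs A v) * card (out_nbrs A v)"

definition false_twins :: "('a \<times> 'a) set \<Rightarrow> 'a \<Rightarrow> 'a \<Rightarrow> bool" where
  "false_twins A u v \<longleftrightarrow> in_nbrs A u = in_nbrs A v \<and> out_nbrs A u = out_nbrs A v"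

definition elim :: "('a \<times> 'a) set \<Rightarrow> 'a \<Rightarrow> ('a \<times> 'a) set" where
  "elim A v = {(x, y). (x, y) \<in> A \<and> x \<noteq> v \<and> y \<noteq> v}
              \<union> {(x, y). x \<in> in_nbrs A v \<and> y \<in> out_nbrs A v}"

fun elim_cost :: "('a \<times> 'a) set \<Rightarrow> 'a list \<Rightarrow> nat" where
  "elim_cost A [] = 0"
| "elim_cost A (v # vs) = markowitz A v + elim_cost (elim A v) vs"

definition total_elim_seq :: "'a set \<Rightarrow> 'a list \<Rightarrow> bool" where
  "total_elim_seq I \<sigma> \<longleftrightarrow> distinct \<sigma> \<and> set \<sigma> = I"

end

theory Submission
  imports Defs
begin

definition del :: "('a \<times> 'a) set \<Rightarrow> 'a set \<Rightarrow> ('a \<times> 'a) set" where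
  "del A R = {(x, y). (x, y) \<in> A \<and> x \<notin> R \<and> y \<notin> R}"

fun poss :: "'a set \<Rightarrow> 'a list \<Rightarrow> nat list" where
  "poss T [] = []"
| "poss T (x # xs) = (if x \<in> T then 0 # poss T xs else map Suc (poss T xs))"

definition nX :: "('a \<times> 'a) set \<Rightarrow> 'a \<Rightarrow> 'a set \<Rightarrow> 'a set" where
  "nX K w X = (X - {w}) \<union> (if w \<in> X then in_nbrs K w else {})"

definition nY :: "('a \<times> 'a) set \<Rightarrow> 'a \<Rightarrow> 'a set \<Rightarrow> 'a set" where
  "nY K w Y = (Y - {w}) \<union> (if w \<in> Y then out_nbrs K w else {})"

definition dl :: "('a \<times> 'a) set \<Rightarrow> 'a set \<Rightarrow> 'a set \<Rightarrow> 'a \<Rightarrow> nat" where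
  "dl K X Y w = (if w \<in> Y then card (out_nbrs K w) else if w \<in> X then card (in_nbrs K w) else 0)"

fun Phi :: "('a \<times> 'a) set \<Rightarrow> 'a set \<Rightarrow> 'a set \<Rightarrow> 'a list \<Rightarrow> nat \<Rightarrow> nat" where
  "Phi K X Y \<rho> 0 = card X * card Y"
| "Phi K X Y [] (Suc p) = card X * card Y"
| "Phi K X Y (w # \<rho>) (Suc p) = dl K X Y w + Phi (elim K w) (nX K w X) (nY K w Y) \<rho> p"

lemma acyc_irrefl: "acyclic H \<Longrightarrow> (a, a) \<in> H \<Longrightarrow> False"
  unfolding acyclic_def using r_into_trancl by metis

lemma acyc_2: "acyclic H \<Longrightarrow> (a, b) \<in> H \<Longrightarrow> (b, a) \<in> H \<Longrightarrow> False"
proof -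
  assume h: "acyclic H" "(a, b) \<in> H" "(b, a) \<in> H"
  have "(a, b) \<in> H\<^sup>+" using h(2) by (rule r_into_trancl)
  then have "(a, a) \<in> H\<^sup>+" using h(3) by (rule trancl_into_trancl)
  then show False using h(1) unfolding acyclic_def by blast
qed

lemma acyc_3: "acyclic H \<Longrightarrow> (a, b) \<in> H \<Longrightarrow> (b, c) \<in> H \<Longrightarrow> (c, a) \<in> H \<Longrightarrow> False"
proof -
  assume h: "acyclic H" "(a, b) \<in> H" "(b, c) \<in> H" "(c, a) \<in> H"
  have "(a, b) \<in> H\<^sup>+" using h(2) by (rule r_into_trancl)
  then have "(a, c) \<in> H\<^sup>+" using h(3) by (rule trancl_into_trancl)
  then have "(a, a) \<in> H\<^sup>+" using h(4) by (rule trancl_into_trancl)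
  then show False using h(1) unfolding acyclic_def by blast
qed

lemma acyclic_sub_trancl: "acyclic A \<Longrightarrow> B \<subseteq> A\<^sup>+ \<Longrightarrow> acyclic B"
proof -
  assume a: "acyclic A" and b: "B \<subseteq> A\<^sup>+"
  have "acyclic (A\<^sup>+)" using a unfolding acyclic_def by simp
  then show ?thesis using b by (rule acyclic_subset)
qed

lemma elim_sub_trancl: "elim A v \<subseteq> A\<^sup>+"
  unfolding elim_def in_nbrs_def out_nbrs_def by (auto intro: trancl_into_trancl)

lemma acyclic_elim: "acyclic A \<Longrightarrow> acyclic (elim A v)"
  by (rule acyclic_sub_trancl[OF _ elim_sub_trancl])

lemma finite_elim: "finite A \<Longrightarrow> finite (elim A v)"
proof -
  assume f: "finite A"
  have "elim A v \<subseteq> A \<union> (fst ` A \<times> snd ` A)"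
    unfolding elim_def in_nbrs_def out_nbrs_def by force
  moreover have "finite (A \<union> (fst ` A \<times> snd ` A))" using f by simp
  ultimately show ?thesis by (rule finite_subset)
qed

lemma finite_in: "finite A \<Longrightarrow> finite (in_nbrs A v)"
proof -
  assume "finite A"
  moreover have "in_nbrs A v \<subseteq> fst ` A" unfolding in_nbrs_def by force
  ultimately show ?thesis by (simp add: finite_subset)
qed

lemma finite_out: "finite A \<Longrightarrow> finite (out_nbrs A v)"
proof -
  assume "finite A"
  moreover have "out_nbrs A v \<subseteq> snd ` A" unfolding out_nbrs_def by force
  ultimately show ?thesis by (simp add: finite_subset)
qed

lemma elim_mono: "A \<subseteq> B \<Longrightarrow> elim A v \<subseteq> elim B v"
  unfolding elim_def in_nbrs_def out_nbrs_def by auto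

lemma cost_mono: "finite B \<Longrightarrow> A \<subseteq> B \<Longrightarrow> elim_cost A \<sigma> \<le> elim_cost B \<sigma>"
proof (induction \<sigma> arbitrary: A B)
  case Nil
  then show ?case by simp
next
  case (Cons v \<sigma>)
  have "markowitz A v \<le> markowitz B v"
    unfolding markowitz_def
  proof (rule mult_le_mono)
    show "card (in_nbrs A v) \<le> card (in_nbrs B v)"
      using Cons.prems by (intro card_mono finite_in) (auto simp: in_nbrs_def)
    show "card (out_nbrs A v) \<le> card (out_nbrs B v)"
      using Cons.prems by (intro card_mono finite_out) (auto simp: out_nbrs_def)
  qed
  moreover have "elim_cost (elim A v) \<sigma> \<le> elim_cost (elim B v) \<sigma>"
    using Cons by (simp add: finite_elim elim_mono)
  ultimately show ?case by simp
qed

lemma twins_elim: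
  assumes "false_twins H u v" "u \<noteq> w" "v \<noteq> w"
  shows "false_twins (elim H w) u v"
  using assms unfolding false_twins_def elim_def in_nbrs_def out_nbrs_def
  by (auto simp: set_eq_iff)

lemma del_elim_commute: "w \<notin> R \<Longrightarrow> del (elim H w) R = elim (del H R) w"
  unfolding del_def elim_def in_nbrs_def out_nbrs_def by auto


definition tw :: "('a \<times> 'a) set \<Rightarrow> 'a set \<Rightarrow> 'a set \<Rightarrow> 'a set \<Rightarrow> bool" where
  "tw H T X Y \<longleftrightarrow> (\<forall>t\<in>T. in_nbrs H t = X \<and> out_nbrs H t = Y)"

lemma tw_notin:
  assumes "acyclic H" "tw H T X Y" "t \<in> T"
  shows "t \<notin> X" "t \<notin> Y"
proof -
  have X: "in_nbrs H t = X" and Y: "out_nbrs H t = Y" using assms(2,3) unfolding tw_def by auto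
  show "t \<notin> X"
  proof
    assume "t \<in> X" then have "(t, t) \<in> H" using X unfolding in_nbrs_def by auto
    then show False by (rule acyc_irrefl[OF assms(1)])
  qed
  show "t \<notin> Y"
  proof
    assume "t \<in> Y" then have "(t, t) \<in> H" using Y unfolding out_nbrs_def by auto
    then show False by (rule acyc_irrefl[OF assms(1)])
  qed
qed

lemma tw_disj:
  assumes "acyclic H" "tw H T X Y" "t \<in> T" "w \<in> X"
  shows "w \<notin> Y"
proof
  assume "w \<in> Y"
  then have "(t, w) \<in> H" "(w, t) \<in> H" using assms unfolding tw_def in_nbrs_def out_nbrs_def by auto
  then show False by (rule acyc_2[OF assms(1)])
qed

lemma in_del: "w \<notin> R \<Longrightarrow> in_nbrs (del H R) w = in_nbrs H w - R"
  unfolding del_def in_nbrs_def by auto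

lemma out_del: "w \<notin> R \<Longrightarrow> out_nbrs (del H R) w = out_nbrs H w - R"
  unfolding del_def out_nbrs_def by auto

lemma in_noT:
  assumes "acyclic H" "tw H T X Y" "t \<in> T" "w \<in> X"
  shows "in_nbrs H w \<inter> T = {}"
proof -
  have "w \<notin> Y" using tw_disj[OF assms(1,2,3)] assms(4) by blast
  then show ?thesis using assms(2) unfolding tw_def in_nbrs_def out_nbrs_def by auto
qed

lemma out_noT:
  assumes "acyclic H" "tw H T X Y" "t \<in> T" "w \<in> Y"
  shows "out_nbrs H w \<inter> T = {}"
proof -
  have "w \<notin> X" using tw_disj[OF assms(1,2,3)] assms(4) by blast
  then show ?thesis using assms(2) unfolding tw_def in_nbrs_def out_nbrs_def by auto
qed

lemma in_elim_tw:
  assumes "acyclic H" "tw H T X Y" "w \<notin> T" "t \<in> T"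
  shows "in_nbrs (elim H w) t = nX (del H T) w X"
proof -
  have X: "in_nbrs H t = X" and Y: "out_nbrs H t = Y" using assms(2,4) unfolding tw_def by auto
  have tw: "t \<noteq> w" using assms by auto
  have e: "in_nbrs (elim H w) t = (X - {w}) \<union> (if w \<in> X then in_nbrs H w else {})"
    using X tw unfolding elim_def in_nbrs_def out_nbrs_def by auto
  show ?thesis
  proof (cases "w \<in> X")
    case True
    then have "in_nbrs H w \<inter> T = {}" using in_noT[OF assms(1,2,4) True] by blast
    then have "in_nbrs (del H T) w = in_nbrs H w" using in_del[OF assms(3)] by auto
    then show ?thesis using e True unfolding nX_def by simp
  next
    case False
    then show ?thesis using e unfolding nX_def by simp
  qed
qed

lemma out_elim_tw:
  assumes "acyclic H" "tw H T X Y" "w \<notin> T" "t \<in> T"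
  shows "out_nbrs (elim H w) t = nY (del H T) w Y"
proof -
  have X: "in_nbrs H t = X" and Y: "out_nbrs H t = Y" using assms(2,4) unfolding tw_def by auto
  have tw: "t \<noteq> w" using assms by auto
  have e: "out_nbrs (elim H w) t = (Y - {w}) \<union> (if w \<in> Y then out_nbrs H w else {})"
    using Y tw unfolding elim_def in_nbrs_def out_nbrs_def by auto
  show ?thesis
  proof (cases "w \<in> Y")
    case True
    then have "out_nbrs H w \<inter> T = {}" using out_noT[OF assms(1,2,4) True] by blast
    then have "out_nbrs (del H T) w = out_nbrs H w" using out_del[OF assms(3)] by auto
    then show ?thesis using e True unfolding nY_def by simp
  next
    case False
    then show ?thesis using e unfolding nY_def by simp
  qed
qed

lemma tw_elim:
  assumes "acyclic H" "tw H T X Y" "w \<notin> T"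
  shows "tw (elim H w) T (nX (del H T) w X) (nY (del H T) w Y)"
  using in_elim_tw[OF assms] out_elim_tw[OF assms] unfolding tw_def by blast

lemma closed_elim:
  assumes "acyclic H" "tw H T X Y" "w \<notin> T" "t \<in> T" "X \<times> Y \<subseteq> H"
  shows "nX (del H T) w X \<times> nY (del H T) w Y \<subseteq> elim H w"
proof
  fix p assume p: "p \<in> nX (del H T) w X \<times> nY (del H T) w Y"
  then obtain x y where xy: "p = (x, y)" "x \<in> nX (del H T) w X" "y \<in> nY (del H T) w Y" by blast
  show "p \<in> elim H w"
  proof (cases "w \<in> X")
    case True
    then have wY: "w \<notin> Y" using tw_disj[OF assms(1,2,4) True] by blast
    have yY: "y \<in> Y" "y \<noteq> w" using xy wY unfolding nY_def by auto
    show ?thesis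
    proof (cases "x \<in> X - {w}")
      case True
      then have "(x, y) \<in> H" using yY assms(5) by auto
      then show ?thesis using xy True yY unfolding elim_def by auto
    next
      case False
      then have "x \<in> in_nbrs (del H T) w" using xy True unfolding nX_def by auto
      then have "x \<in> in_nbrs H w" unfolding del_def in_nbrs_def by auto
      moreover have "y \<in> out_nbrs H w" using True yY assms(5) unfolding out_nbrs_def by auto
      ultimately show ?thesis using xy unfolding elim_def by auto
    qed
  next
    case False
    note wX = False
    have xX: "x \<in> X" "x \<noteq> w" using xy wX unfolding nX_def by auto
    show ?thesis
    proof (cases "y \<in> Y - {w}")
      case True
      then have "(x, y) \<in> H" using xX assms(5) by auto
      then show ?thesis using xy True xX unfolding elim_def by auto
    next
      case False
      then have wY: "w \<in> Y" and "y \<in> out_nbrs (del H T) w" using xy unfolding nY_def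
        by (auto split: if_splits)
      then have "y \<in> out_nbrs H w" unfolding del_def out_nbrs_def by auto
      moreover have "x \<in> in_nbrs H w" using wY xX assms(5) unfolding in_nbrs_def by auto
      ultimately show ?thesis using xy unfolding elim_def by auto
    qed
  qed
qed

lemma markowitz_split:
  assumes "acyclic H" "finite H" "finite T" "tw H T X Y" "w \<notin> T" "t \<in> T"
  shows "markowitz H w = markowitz (del H T) w + card T * dl (del H T) X Y w"
proof -
  let ?K = "del H T"
  have fK: "finite ?K" using assms(2) unfolding del_def by (rule rev_finite_subset) auto
  have inH: "in_nbrs H w = in_nbrs ?K w \<union> (if w \<in> Y then T else {})"
    using assms(4,5,6) unfolding tw_def del_def in_nbrs_def out_nbrs_def by auto
  have outH: "out_nbrs H w = out_nbrs ?K w \<union> (if w \<in> X then T else {})"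
    using assms(4,5,6) unfolding tw_def del_def in_nbrs_def out_nbrs_def by auto
  have dI: "in_nbrs ?K w \<inter> T = {}" unfolding in_nbrs_def del_def by auto
  have dO: "out_nbrs ?K w \<inter> T = {}" unfolding out_nbrs_def del_def by auto
  have ci: "card (in_nbrs H w) = card (in_nbrs ?K w) + (if w \<in> Y then card T else 0)"
    unfolding inH using card_Un_disjoint[OF finite_in[OF fK] assms(3) dI] by simp
  have co: "card (out_nbrs H w) = card (out_nbrs ?K w) + (if w \<in> X then card T else 0)"
    unfolding outH using card_Un_disjoint[OF finite_out[OF fK] assms(3) dO] by simp
  have nb: "\<not> (w \<in> X \<and> w \<in> Y)" using tw_disj[OF assms(1,4,6)] by blast
  show ?thesis unfolding markowitz_def ci co dl_def using nb
    by (auto simp: algebra_simps)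
qed

lemma del_empty: "del H {} = H"
  unfolding del_def by auto

lemma del_del: "del (del H A) B = del H (A \<union> B)"
  unfolding del_def by auto

lemma elim_closed_twin:
  assumes "acyclic H" "tw H T X Y" "t \<in> T" "X \<times> Y \<subseteq> H"
  shows "elim H t = del H {t}"
proof -
  have "in_nbrs H t = X" "out_nbrs H t = Y" using assms unfolding tw_def by auto
  moreover have "t \<notin> X" "t \<notin> Y" using tw_notin[OF assms(1,2,3)] by blast+
  ultimately show ?thesis using assms(4) unfolding elim_def del_def by auto
qed


lemma poss_cong: "(\<forall>x\<in>set \<sigma>. x \<in> A \<longleftrightarrow> x \<in> B) \<Longrightarrow> poss A \<sigma> = poss B \<sigma>"
  by (induction \<sigma>) auto

lemma poss_empty: "poss {} \<sigma> = []"
  by (induction \<sigma>) auto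

lemma length_poss: "length (poss T \<sigma>) = length (filter (\<lambda>x. x \<in> T) \<sigma>)"
  by (induction \<sigma>) auto

lemma length_poss_card: "distinct \<sigma> \<Longrightarrow> T \<subseteq> set \<sigma> \<Longrightarrow> length (poss T \<sigma>) = card T"
proof -
  assume d: "distinct \<sigma>" and s: "T \<subseteq> set \<sigma>"
  have "set (filter (\<lambda>x. x \<in> T) \<sigma>) = T" using s by auto
  moreover have "distinct (filter (\<lambda>x. x \<in> T) \<sigma>)" using d by simp
  ultimately have "card T = length (filter (\<lambda>x. x \<in> T) \<sigma>)" using distinct_card by fastforce
  then show ?thesis by (simp add: length_poss)
qed

lemma sum_list_addf: "sum_list (map (\<lambda>p. c + f p) xs) = length xs * c + sum_list (map f xs)"
  by (induction xs) (auto simp: algebra_simps)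

lemma SF:
  assumes "acyclic H" "finite H" "tw H T X Y" "X \<times> Y \<subseteq> H" "distinct \<sigma>" "T \<subseteq> set \<sigma>"
  shows "elim_cost H \<sigma> = elim_cost (del H T) (filter (\<lambda>x. x \<notin> T) \<sigma>)
           + sum_list (map (Phi (del H T) X Y (filter (\<lambda>x. x \<notin> T) \<sigma>)) (poss T \<sigma>))"
  using assms
proof (induction \<sigma> arbitrary: H T X Y)
  case Nil
  then show ?case by (simp add: del_empty)
next
  case (Cons a \<sigma>)
  show ?case
  proof (cases "a \<in> T")
    case True
    let ?T' = "T - {a}"
    have aX: "a \<notin> X" "a \<notin> Y" using tw_notin[OF Cons.prems(1,3) True] by blast+
    have e: "elim H a = del H {a}" by (rule elim_closed_twin[OF Cons.prems(1,3) True Cons.prems(4)])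
    have ac: "acyclic (del H {a})" using Cons.prems(1) by (rule acyclic_subset) (auto simp: del_def)
    have fi: "finite (del H {a})" using Cons.prems(2) by (rule rev_finite_subset) (auto simp: del_def)
    have tw': "tw (del H {a}) ?T' X Y"
      using Cons.prems(3) aX unfolding tw_def in_nbrs_def out_nbrs_def del_def by auto
    have cl: "X \<times> Y \<subseteq> del H {a}" using Cons.prems(4) aX unfolding del_def by auto
    have d: "distinct \<sigma>" using Cons.prems(5) by simp
    have an: "a \<notin> set \<sigma>" using Cons.prems(5) by simp
    have sub: "?T' \<subseteq> set \<sigma>" using Cons.prems(6) by auto
    note IH = Cons.IH[OF ac fi tw' cl d sub]
    have dd: "del (del H {a}) ?T' = del H T" using True by (simp add: del_del insert_absorb)
    have ff: "filter (\<lambda>x. x \<notin> ?T') \<sigma> = filter (\<lambda>x. x \<notin> T) \<sigma>"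
      using an by (intro filter_cong) auto
    have pp: "poss ?T' \<sigma> = poss T \<sigma>" using an by (intro poss_cong) auto
    have m: "markowitz H a = card X * card Y"
      using Cons.prems(3) True unfolding tw_def markowitz_def by auto
    show ?thesis using IH True e m unfolding dd ff pp by simp
  next
    case False
    show ?thesis
    proof (cases "T = {}")
      case True
      then show ?thesis by (simp add: del_empty poss_empty)
    next
      case False
      note aT = \<open>a \<notin> T\<close>
      then obtain t where t: "t \<in> T" using False by blast
      let ?K = "del H T"
      let ?X' = "nX ?K a X" and ?Y' = "nY ?K a Y"
      have ac: "acyclic (elim H a)" using Cons.prems(1) by (rule acyclic_elim)
      have fi: "finite (elim H a)" using Cons.prems(2) by (rule finite_elim)
      have tw': "tw (elim H a) T ?X' ?Y'" by (rule tw_elim[OF Cons.prems(1,3) aT])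
      have cl: "?X' \<times> ?Y' \<subseteq> elim H a" by (rule closed_elim[OF Cons.prems(1,3) aT t Cons.prems(4)])
      have d: "distinct \<sigma>" using Cons.prems(5) by simp
      have sub: "T \<subseteq> set \<sigma>" using Cons.prems(6) aT by auto
      note IH = Cons.IH[OF ac fi tw' cl d sub]
      have dc: "del (elim H a) T = elim ?K a" by (rule del_elim_commute[OF aT])
      have fT: "finite T" by (rule finite_subset[OF sub List.finite_set])
      have ms: "markowitz H a = markowitz ?K a + card T * dl ?K X Y a"
        by (rule markowitz_split[OF Cons.prems(1,2) fT Cons.prems(3) aT t])
      have lp: "length (poss T \<sigma>) = card T" by (rule length_poss_card[OF d sub])
      have "elim_cost H (a # \<sigma>) = markowitz H a + elim_cost (elim H a) \<sigma>" by simp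
      also have "\<dots> = markowitz ?K a + card T * dl ?K X Y a
          + elim_cost (elim ?K a) (filter (\<lambda>x. x \<notin> T) \<sigma>)
          + sum_list (map (Phi (elim ?K a) ?X' ?Y' (filter (\<lambda>x. x \<notin> T) \<sigma>)) (poss T \<sigma>))"
        using IH ms unfolding dc by simp
      also have "\<dots> = elim_cost ?K (filter (\<lambda>x. x \<notin> T) (a # \<sigma>))
          + sum_list (map (Phi ?K X Y (filter (\<lambda>x. x \<notin> T) (a # \<sigma>))) (poss T (a # \<sigma>)))"
        using aT lp by (simp add: comp_def sum_list_addf)
      finally show ?thesis .
    qed
  qed
qed


lemma poss_append:
  "poss T (xs @ ys) = poss T xs @ map (\<lambda>p. p + length (filter (\<lambda>x. x \<notin> T) xs)) (poss T ys)"
  by (induction xs) (auto simp: comp_def)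

lemma poss_le: "p \<in> set (poss T \<sigma>) \<Longrightarrow> p \<le> length (filter (\<lambda>x. x \<notin> T) \<sigma>)"
  by (induction \<sigma> arbitrary: p) (auto split: if_splits)

lemma poss_noT: "\<forall>x\<in>set xs. x \<notin> T \<Longrightarrow> poss T xs = []"
  by (induction xs) auto

lemma poss_allT: "\<forall>x\<in>set xs. x \<in> T \<Longrightarrow> poss T xs = replicate (length xs) 0"
  by (induction xs) auto

lemma sum_list_const: "sum_list (map (\<lambda>_. c) xs) = length xs * (c::nat)"
  by (induction xs) auto

lemma min_choice:
  fixes f :: "nat \<Rightarrow> nat"
  assumes "ps \<noteq> []"
  shows "\<exists>q\<in>set ps. length ps * f q \<le> sum_list (map f ps)"
proof -
  obtain p0 where "p0 \<in> set ps" using assms by (cases ps) auto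
  then obtain q where q: "q \<in> set ps" "\<forall>y. y \<in> set ps \<longrightarrow> f q \<le> f y"
    using ex_has_least_nat[of "\<lambda>q. q \<in> set ps" p0 f] by blast
  have "sum_list (map (\<lambda>_. f q) ps) \<le> sum_list (map f ps)"
    using q(2) by (intro sum_list_mono) auto
  then show ?thesis using q(1) by (auto simp: sum_list_const)
qed

lemma twin_head_plus:
  assumes "acyclic H" "tw H T X Y" "t \<in> T"
  shows "elim_cost H (t # \<sigma>) = elim_cost (H \<union> X \<times> Y) (t # \<sigma>)"
proof -
  have X: "in_nbrs H t = X" and Y: "out_nbrs H t = Y" using assms(2,3) unfolding tw_def by auto
  have tn: "t \<notin> X" "t \<notin> Y" using tw_notin[OF assms] by blast+
  have "in_nbrs (H \<union> X \<times> Y) t = X" using X tn unfolding in_nbrs_def by auto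
  moreover have "out_nbrs (H \<union> X \<times> Y) t = Y" using Y tn unfolding out_nbrs_def by auto
  ultimately have m: "markowitz (H \<union> X \<times> Y) t = markowitz H t" and
    e: "elim (H \<union> X \<times> Y) t = elim H t"
    using X Y tn unfolding markowitz_def elim_def by auto
  show ?thesis using m e by simp
qed

lemma plus_props:
  assumes "acyclic H" "finite H" "tw H T X Y" "t \<in> T"
  shows "acyclic (H \<union> X \<times> Y)" "finite (H \<union> X \<times> Y)" "tw (H \<union> X \<times> Y) T X Y"
proof -
  have X: "in_nbrs H t = X" and Y: "out_nbrs H t = Y" using assms(3,4) unfolding tw_def by auto
  have "H \<union> X \<times> Y \<subseteq> H\<^sup>+"
  proof
    fix p assume "p \<in> H \<union> X \<times> Y"
    then show "p \<in> H\<^sup>+"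
    proof
      assume "p \<in> H" then show ?thesis by (rule r_into_trancl')
    next
      assume "p \<in> X \<times> Y"
      then obtain x y where "p = (x, y)" "(x, t) \<in> H" "(t, y) \<in> H"
        using X Y unfolding in_nbrs_def out_nbrs_def by auto
      then show ?thesis by (meson r_into_trancl' trancl_into_trancl)
    qed
  qed
  then show "acyclic (H \<union> X \<times> Y)" by (rule acyclic_sub_trancl[OF assms(1)])
  show "finite (H \<union> X \<times> Y)" using finite_in[OF assms(2)] finite_out[OF assms(2)] X Y assms(2)
    by auto
  show "tw (H \<union> X \<times> Y) T X Y"
  proof -
    { fix s assume s: "s \<in> T"
      have "s \<notin> X" "s \<notin> Y" using tw_notin[OF assms(1,3) s] by blast+
      then have "in_nbrs (H \<union> X \<times> Y) s = X \<and> out_nbrs (H \<union> X \<times> Y) s = Y"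
        using assms(3) s unfolding tw_def in_nbrs_def out_nbrs_def by auto }
    then show ?thesis unfolding tw_def by blast
  qed
qed


lemma twin_head_case:
  assumes ac: "acyclic H" and fin: "finite H" and twT: "\<forall>u\<in>T. \<forall>v\<in>T. false_twins H u v"
    and d: "distinct (a # \<sigma>1)" and sub: "T \<subseteq> set (a # \<sigma>1)" and aT: "a \<in> T"
  shows "\<exists>\<sigma>'. distinct \<sigma>' \<and> set \<sigma>' = set (a # \<sigma>1) \<and> (\<exists>xs ys zs. \<sigma>' = xs @ ys @ zs \<and> set ys = T)
             \<and> elim_cost H \<sigma>' \<le> elim_cost H (a # \<sigma>1)"
proof -
  define \<sigma> where "\<sigma> = a # \<sigma>1"
  define X where "X = in_nbrs H a"
  define Y where "Y = out_nbrs H a"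
  have tw: "tw H T X Y" using twT aT unfolding tw_def X_def Y_def false_twins_def by metis
  let ?H' = "H \<union> X \<times> Y"
  note pp = plus_props[OF ac fin tw aT]
  define \<rho> where "\<rho> = filter (\<lambda>x. x \<notin> T) \<sigma>"
  define tl where "tl = filter (\<lambda>x. x \<in> T) \<sigma>"
  define ps where "ps = poss T \<sigma>"
  define \<Phi> where "\<Phi> = Phi (del ?H' T) X Y \<rho>"
  have dS: "distinct \<sigma>" and sS: "T \<subseteq> set \<sigma>" using d sub unfolding \<sigma>_def by auto
  have psne: "ps \<noteq> []" unfolding ps_def \<sigma>_def using aT by simp
  obtain q where q: "q \<in> set ps" "length ps * \<Phi> q \<le> sum_list (map \<Phi> ps)"
    using min_choice[OF psne] by blast
  have lps: "length ps = card T" unfolding ps_def by (rule length_poss_card[OF dS sS])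
  have qle: "q \<le> length \<rho>" using poss_le q(1) unfolding ps_def \<rho>_def by blast
  define \<sigma>' where "\<sigma>' = take q \<rho> @ tl @ drop q \<rho>"
  have dr: "distinct \<rho>" "distinct tl" using dS unfolding \<rho>_def tl_def by auto
  have stl: "set tl = T" using sS unfolding tl_def by auto
  have sr: "set \<rho> \<inter> T = {}" unfolding \<rho>_def by auto
  have dtd: "distinct (take q \<rho> @ drop q \<rho>)" using dr(1) by simp
  have d': "distinct \<sigma>'"
    unfolding \<sigma>'_def using dtd dr(2) stl sr set_take_subset[of q \<rho>] set_drop_subset[of q \<rho>]
    by (auto simp del: append_take_drop_id)
  have std: "set (take q \<rho>) \<union> set (drop q \<rho>) = set \<rho>" by (metis append_take_drop_id set_append)
  have "set \<sigma>' = set \<rho> \<union> set tl"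
    unfolding \<sigma>'_def using std by auto
  then have s': "set \<sigma>' = set \<sigma>" unfolding \<rho>_def tl_def by auto
  have nT1: "\<forall>x\<in>set (take q \<rho>). x \<notin> T" using sr set_take_subset[of q \<rho>] by blast
  have nT2: "\<forall>x\<in>set (drop q \<rho>). x \<notin> T" using sr set_drop_subset[of q \<rho>] by blast
  have aT2: "\<forall>x\<in>set tl. x \<in> T" using stl by blast
  have f': "filter (\<lambda>x. x \<notin> T) \<sigma>' = \<rho>"
  proof -
    have "filter (\<lambda>x. x \<notin> T) \<sigma>' = take q \<rho> @ drop q \<rho>"
      unfolding \<sigma>'_def using nT1 nT2 aT2 by (simp add: filter_empty_conv)
    then show ?thesis by simp
  qed
  have lt: "length (filter (\<lambda>x. x \<notin> T) (take q \<rho>)) = q"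
    using nT1 qle by simp
  have p': "poss T \<sigma>' = replicate (card T) q"
    unfolding \<sigma>'_def poss_append poss_noT[OF nT1] poss_noT[OF nT2] poss_allT[OF aT2] lt
    using stl dr(2) distinct_card[OF dr(2)] by (simp add: map_replicate_const)
  have SF1: "elim_cost ?H' \<sigma> = elim_cost (del ?H' T) \<rho> + sum_list (map \<Phi> ps)"
    unfolding \<rho>_def \<Phi>_def ps_def
    by (rule SF[OF pp(1) pp(2) pp(3) _ dS sS]) simp
  have SF2: "elim_cost ?H' \<sigma>' = elim_cost (del ?H' T) \<rho> + sum_list (map \<Phi> (poss T \<sigma>'))"
    unfolding \<Phi>_def using SF[OF pp(1) pp(2) pp(3) _ d' ] s' sS f' by simp
  have "elim_cost H \<sigma>' \<le> elim_cost ?H' \<sigma>'" by (rule cost_mono[OF pp(2)]) auto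
  also have "\<dots> = elim_cost (del ?H' T) \<rho> + card T * \<Phi> q" using SF2 p' by (simp add: sum_list_replicate)
  also have "\<dots> \<le> elim_cost ?H' \<sigma>" using SF1 q(2) lps by simp
  also have "\<dots> = elim_cost H \<sigma>" unfolding \<sigma>_def by (rule twin_head_plus[OF ac tw aT, symmetric])
  finally have c: "elim_cost H \<sigma>' \<le> elim_cost H \<sigma>" .
  show ?thesis
    using d' s' c stl unfolding \<sigma>_def[symmetric] \<sigma>'_def by blast
qed

lemma main_lemma:
  "finite H \<Longrightarrow> acyclic H \<Longrightarrow> \<forall>u\<in>T. \<forall>v\<in>T. false_twins H u v \<Longrightarrow> distinct \<sigma> \<Longrightarrow> T \<subseteq> set \<sigma> \<Longrightarrow>
   \<exists>\<sigma>'. distinct \<sigma>' \<and> set \<sigma>' = set \<sigma> \<and> (\<exists>xs ys zs. \<sigma>' = xs @ ys @ zs \<and> set ys = T)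
        \<and> elim_cost H \<sigma>' \<le> elim_cost H \<sigma>"
proof (induction \<sigma> arbitrary: H)
  case Nil
  then show ?case by (intro exI[of _ "[]"]) auto
next
  case (Cons a \<sigma>)
  show ?case
  proof (cases "a \<in> T")
    case True
    show ?thesis by (rule twin_head_case[OF Cons.prems(2,1,3,4,5) True])
  next
    case False
    have tw': "\<forall>u\<in>T. \<forall>v\<in>T. false_twins (elim H a) u v"
      using Cons.prems(3) False twins_elim by metis
    have sub: "T \<subseteq> set \<sigma>" using Cons.prems(5) False by auto
    obtain \<sigma>' where s: "distinct \<sigma>'" "set \<sigma>' = set \<sigma>" "\<exists>xs ys zs. \<sigma>' = xs @ ys @ zs \<and> set ys = T"
      "elim_cost (elim H a) \<sigma>' \<le> elim_cost (elim H a) \<sigma>"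
      using Cons.IH[OF finite_elim[OF Cons.prems(1)] acyclic_elim[OF Cons.prems(2)] tw' _ sub]
        Cons.prems(4) by auto
    then obtain xs ys zs where "\<sigma>' = xs @ ys @ zs" "set ys = T" by blast
    then have "a # \<sigma>' = (a # xs) @ ys @ zs \<and> set ys = T" by simp
    moreover have "distinct (a # \<sigma>')" using s(1,2) Cons.prems(4) by simp
    moreover have "set (a # \<sigma>') = set (a # \<sigma>)" using s(2) by simp
    moreover have "elim_cost H (a # \<sigma>') \<le> elim_cost H (a # \<sigma>)" using s(4) by simp
    ultimately show ?thesis by blast
  qed
qed


theorem proposition2:
  fixes S I T :: "'a set" and A :: "('a \<times> 'a) set"
  assumes "finite S" and "finite I" and "S \<inter> I = {}"
    and "A \<subseteq> (S \<union> I) \<times> (S \<union> I)"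
    and "acyclic A"
    and "T \<subseteq> I"
    and "\<forall>u\<in>T. \<forall>v\<in>T. false_twins A u v"
  shows "\<exists>\<sigma>. total_elim_seq I \<sigma>
            \<and> (\<forall>\<sigma>'. total_elim_seq I \<sigma>' \<longrightarrow> elim_cost A \<sigma> \<le> elim_cost A \<sigma>')
            \<and> (\<exists>xs ys zs. \<sigma> = xs @ ys @ zs \<and> set ys = T)"
proof -
  have fA: "finite A" using assms(1,2,4) by (rule_tac finite_subset[OF assms(4)]) auto
  obtain \<sigma>i where "set \<sigma>i = I" "distinct \<sigma>i" using finite_distinct_list[OF assms(2)] by blast
  then have "total_elim_seq I \<sigma>i" unfolding total_elim_seq_def by blast
  then obtain \<sigma>0 where o: "total_elim_seq I \<sigma>0"
    "\<forall>y. total_elim_seq I y \<longrightarrow> elim_cost A \<sigma>0 \<le> elim_cost A y"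
    using ex_has_least_nat[of "total_elim_seq I" \<sigma>i "elim_cost A"] by blast
  have d0: "distinct \<sigma>0" "set \<sigma>0 = I" using o(1) unfolding total_elim_seq_def by auto
  obtain \<sigma>' where s: "distinct \<sigma>'" "set \<sigma>' = set \<sigma>0" "\<exists>xs ys zs. \<sigma>' = xs @ ys @ zs \<and> set ys = T"
    "elim_cost A \<sigma>' \<le> elim_cost A \<sigma>0"
    using main_lemma[OF fA assms(5) assms(7) d0(1)] d0(2) assms(6) by blast
  have "total_elim_seq I \<sigma>'" using s(1,2) d0(2) unfolding total_elim_seq_def by simp
  moreover have "\<forall>y. total_elim_seq I y \<longrightarrow> elim_cost A \<sigma>' \<le> elim_cost A y"
    using o(2) s(4) le_trans by blast
  ultimately show ?thesis using s(3) by blast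
qed

end
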